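(* Let $p$ be a prime with $p\mid n$, $e\in\mathbb{N}$, and let $\{R_j\}_{j\in J}$ be a system of representatives of the right cosets in $\Gamma_0(p^{e+1}n)\backslash\Gamma_0(pn)$. Then $\{B_pR_jB_p^{-1}\}_{j\in J}$ is a system of representatives of the right cosets in $\Gamma_0(p^en)\backslash\Gamma_0(n)$.
   Context: $B_p=\begin{pmatrix}p&0\\0&1\end{pmatrix}$; $\Gamma_0(N)=\{\begin{pmatrix}a&b\\c&d\end{pmatrix}\in SL(2,\mathbb{Z}):N\mid c\}$. A system of representatives $\{R_j\}$ of the right cosets in $H\backslash G$ means $G=\bigsqcup_jHR_j$ (disjoint union). For $g\in\Gamma_0(pn)$, $B_pgB_p^{-1}\in SL(2,\mathbb{Z})$. *)

theory Defs
  imports "HOL-Analysis.Analysis"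
begin

text \<open>2x2 matrices are modelled as real matrices (type real^2^2), so that the
conjugate B_p g B_p^{-1} (which involves the non-integral matrix B_p^{-1}) makes sense.\<close>

definition SL2Z :: "(real^2^2) set" where
  "SL2Z = {g. (\<forall>i j. g $ i $ j \<in> \<int>) \<and> det g = 1}"

definition Gamma0 :: "nat \<Rightarrow> (real^2^2) set" where
  "Gamma0 N = {g \<in> SL2Z. \<exists>k::int. g $ 2 $ 1 = of_int (int N * k)}"

definition Bmat :: "nat \<Rightarrow> real^2^2" where
  "Bmat p = (\<chi> i j. if i = 1 \<and> j = 1 then real p
                     else if i = 2 \<and> j = 2 then 1 else 0)"

definition rcoset :: "(real^2^2) set \<Rightarrow> real^2^2 \<Rightarrow> (real^2^2) set" where
  "rcoset H g = {h ** g | h. h \<in> H}"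

definition rcoset_reps :: "(real^2^2) set \<Rightarrow> (real^2^2) set \<Rightarrow> ('j \<Rightarrow> real^2^2) \<Rightarrow> 'j set \<Rightarrow> bool" where
  "rcoset_reps H G R J \<longleftrightarrow>
     G = (\<Union>j\<in>J. rcoset H (R j)) \<and>
     (\<forall>j\<in>J. \<forall>k\<in>J. j \<noteq> k \<longrightarrow> rcoset H (R j) \<inter> rcoset H (R k) = {})"

end

theory Submission
  imports Defs
begin

definition mk :: "real \<Rightarrow> real \<Rightarrow> real \<Rightarrow> real \<Rightarrow> real^2^2" where
  "mk a b c d = (\<chi> i j. if i = 1 then (if j = 1 then a else b) else (if j = 1 then c else d))"

lemma mk_nth [simp]:
  "(mk a b c d)$1$1 = a" "(mk a b c d)$1$2 = b" "(mk a b c d)$2$1 = c" "(mk a b c d)$2$2 = d"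
  by (simp_all add: mk_def)

lemma mk_expand: "(m::real^2^2) = mk (m$1$1) (m$1$2) (m$2$1) (m$2$2)"
  unfolding vec_eq_iff forall_2 by simp

lemma mk_eq: "mk a b c d = mk a' b' c' d' \<longleftrightarrow> a = a' \<and> b = b' \<and> c = c' \<and> d = d'"
  unfolding vec_eq_iff forall_2 by simp

lemma mk_mult: "mk a b c d ** mk a' b' c' d' =
   mk (a*a' + b*c') (a*b' + b*d') (c*a' + d*c') (c*b' + d*d')"
  unfolding vec_eq_iff forall_2 by (simp add: matrix_matrix_mult_def sum_2)

lemma mk_det: "det (mk a b c d) = a*d - b*c"
  by (simp add: det_2)

lemma mat1_mk: "(mat 1 :: real^2^2) = mk 1 0 0 1"
  unfolding vec_eq_iff forall_2 by (simp add: mat_def)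

lemma Bmat_mk: "Bmat p = mk (real p) 0 0 1"
  unfolding vec_eq_iff forall_2 by (simp add: Bmat_def)

lemma Gamma0_iff:
  "g \<in> Gamma0 N \<longleftrightarrow> (\<exists>a b c d :: int. g = mk a b c d \<and> a*d - b*c = 1 \<and> int N dvd c)"
proof
  assume "g \<in> Gamma0 N"
  then have i: "\<forall>i j. g$i$j \<in> \<int>" and dt: "det g = 1" and k: "\<exists>k::int. g$2$1 = of_int (int N * k)"
    unfolding Gamma0_def SL2Z_def by auto
  obtain a where a: "g$1$1 = of_int a" using i Ints_cases by metis
  obtain b where b: "g$1$2 = of_int b" using i Ints_cases by metis
  obtain c where c: "g$2$1 = of_int c" using i Ints_cases by metis
  obtain d where d: "g$2$2 = of_int d" using i Ints_cases by metis
  have g: "g = mk a b c d" using mk_expand[of g] a b c d by simp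
  have "real_of_int (a*d - b*c) = 1" using dt g by (simp add: mk_det)
  then have "a*d - b*c = 1" by linarith
  moreover have "int N dvd c" using k c by (metis dvd_triv_left of_int_eq_iff)
  ultimately show "\<exists>a b c d :: int. g = mk a b c d \<and> a*d - b*c = 1 \<and> int N dvd c" using g by blast
next
  assume "\<exists>a b c d :: int. g = mk a b c d \<and> a*d - b*c = 1 \<and> int N dvd c"
  then obtain a b c d :: int where g: "g = mk a b c d" and dt: "a*d - b*c = 1" and dv: "int N dvd c" by blast
  have "\<forall>i j. g$i$j \<in> \<int>" unfolding g forall_2 by simp
  moreover have "det g = 1" unfolding g mk_det
    by (metis dt of_int_1 of_int_diff of_int_mult)
  moreover obtain k where "c = int N * k" using dv by blast
  then have "g$2$1 = of_int (int N * k)" using g by simp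
  ultimately show "g \<in> Gamma0 N" unfolding Gamma0_def SL2Z_def by blast
qed

lemma Gamma0_mult:
  assumes "g \<in> Gamma0 N" "h \<in> Gamma0 N" shows "g ** h \<in> Gamma0 N"
proof -
  obtain a b c d :: int where g: "g = mk a b c d" and dt: "a*d - b*c = 1" and dv: "int N dvd c"
    using assms(1) Gamma0_iff by blast
  obtain a' b' c' d' :: int where h: "h = mk a' b' c' d'" and dt': "a'*d' - b'*c' = 1" and dv': "int N dvd c'"
    using assms(2) Gamma0_iff by blast
  have "g ** h = mk (of_int (a*a' + b*c')) (of_int (a*b' + b*d')) (of_int (c*a' + d*c')) (of_int (c*b' + d*d'))"
    unfolding g h mk_mult by simp
  moreover have "(a*a' + b*c') * (c*b' + d*d') - (a*b' + b*d') * (c*a' + d*c') = (a*d - b*c)*(a'*d' - b'*c')"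
    by algebra
  moreover have "int N dvd (c*a' + d*c')" using dv dv' by simp
  ultimately show ?thesis unfolding Gamma0_iff using dt dt'
    by (intro exI[of _ "a*a' + b*c'"] exI[of _ "a*b' + b*d'"] exI[of _ "c*a' + d*c'"] exI[of _ "c*b' + d*d'"]) auto
qed

lemma Gamma0_inv:
  assumes "g \<in> Gamma0 N" shows "\<exists>g'\<in>Gamma0 N. g' ** g = mat 1 \<and> g ** g' = mat 1"
proof -
  obtain a b c d :: int where g: "g = mk a b c d" and dt: "a*d - b*c = 1" and dv: "int N dvd c"
    using assms(1) Gamma0_iff by blast
  have dtr: "real_of_int a * real_of_int d - real_of_int b * real_of_int c = 1"
    by (metis dt of_int_1 of_int_diff of_int_mult)
  let ?g = "mk (of_int d) (of_int (-b)) (of_int (-c)) (of_int a)"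
  have "?g \<in> Gamma0 N" unfolding Gamma0_iff
    by (rule exI[of _ d], rule exI[of _ "-b"], rule exI[of _ "-c"], rule exI[of _ a])
       (use dt dv in \<open>auto simp: algebra_simps\<close>)
  moreover have "?g ** g = mat 1" "g ** ?g = mat 1"
    unfolding g mk_mult mat1_mk mk_eq using dtr by (auto simp: algebra_simps)
  ultimately show ?thesis by blast
qed

lemma Gamma0_one: "mat 1 \<in> Gamma0 N"
  unfolding Gamma0_iff mat1_mk by (rule exI[of _ 1], rule exI[of _ 0], rule exI[of _ 0], rule exI[of _ 1]) simp

lemma Gamma0_sub: assumes "N dvd M" shows "Gamma0 M \<subseteq> Gamma0 N"
proof
  fix g assume "g \<in> Gamma0 M"
  then obtain a b c d :: int where "g = mk a b c d" "a*d - b*c = 1" "int M dvd c"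
    using Gamma0_iff by blast
  moreover have "int N dvd c" using assms \<open>int M dvd c\<close> by (meson dvd_trans int_dvd_int_iff)
  ultimately show "g \<in> Gamma0 N" unfolding Gamma0_iff by blast
qed

context
  fixes p :: nat assumes p0: "p > 0"
begin

definition Binv :: "real^2^2" where "Binv = mk (1 / real p) 0 0 1"

lemma B_Binv: "Bmat p ** Binv = mat 1" "Binv ** Bmat p = mat 1"
  using p0 unfolding Bmat_mk Binv_def mk_mult mat1_mk by simp_all

lemma matrix_inv_B: "matrix_inv (Bmat p) = Binv"
proof -
  have "\<exists>A'. Bmat p ** A' = mat 1 \<and> A' ** Bmat p = mat 1" using B_Binv by blast
  then have s: "Bmat p ** matrix_inv (Bmat p) = mat 1 \<and> matrix_inv (Bmat p) ** Bmat p = mat 1"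
    unfolding matrix_inv_def by (rule someI_ex)
  have "matrix_inv (Bmat p) = matrix_inv (Bmat p) ** (Bmat p ** Binv)" using B_Binv by simp
  also have "\<dots> = Binv" by (simp add: matrix_mul_assoc s)
  finally show ?thesis .
qed

lemma phi_mk: "Bmat p ** mk a b c d ** Binv = mk a (real p * b) (c / real p) d"
  using p0 unfolding Bmat_mk Binv_def mk_mult by simp

lemma psi_mk: "Binv ** mk a b c d ** Bmat p = mk a (b / real p) (real p * c) d"
  using p0 unfolding Bmat_mk Binv_def mk_mult by (simp add: mult.commute)

lemma phi_Gamma0: assumes "g \<in> Gamma0 (p * M)" shows "Bmat p ** g ** Binv \<in> Gamma0 M"
proof -
  obtain a b c d :: int where g: "g = mk a b c d" and dt: "a*d - b*c = 1" and dv: "int (p*M) dvd c"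
    using assms Gamma0_iff by blast
  obtain k where k: "c = int p * int M * k" using dv by auto
  have "Bmat p ** g ** Binv = mk (of_int a) (of_int (int p * b)) (of_int (int M * k)) (of_int d)"
    unfolding g phi_mk using p0 k by simp
  moreover have "a*d - (int p * b)*(int M * k) = 1" using dt k by (simp add: algebra_simps)
  ultimately show ?thesis unfolding Gamma0_iff by fastforce
qed

lemma phi_Gamma0_rev:
  assumes "g \<in> Gamma0 K" "Bmat p ** g ** Binv \<in> Gamma0 M" shows "g \<in> Gamma0 (p * M)"
proof -
  obtain a b c d :: int where g: "g = mk a b c d" and dt: "a*d - b*c = 1"
    using assms(1) Gamma0_iff by blast
  obtain a' b' c' d' :: int where h: "Bmat p ** g ** Binv = mk a' b' c' d'" and dv: "int M dvd c'"
    using assms(2) Gamma0_iff by blast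
  have "real_of_int c / real p = real_of_int c'" using h unfolding g phi_mk mk_eq by simp
  then have "real_of_int c = real p * real_of_int c'" using p0 by (simp add: field_simps)
  then have "c = int p * c'" by (metis of_int_eq_iff of_int_mult of_int_of_nat_eq)
  then have "int (p*M) dvd c" using dv by simp
  then show ?thesis unfolding Gamma0_iff using g dt by blast
qed

lemma phi_mult: "Bmat p ** (x ** y) ** Binv = (Bmat p ** x ** Binv) ** (Bmat p ** y ** Binv)"
proof -
  have "(Bmat p ** x ** Binv) ** (Bmat p ** y ** Binv) = Bmat p ** x ** (Binv ** Bmat p) ** y ** Binv"
    by (simp add: matrix_mul_assoc)
  also have "\<dots> = Bmat p ** (x ** y) ** Binv" by (simp add: B_Binv matrix_mul_assoc)
  finally show ?thesis by simp
qed

lemma phi_psi: "Bmat p ** (Binv ** x ** Bmat p) ** Binv = x"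
proof -
  have "Bmat p ** (Binv ** x ** Bmat p) ** Binv = (Bmat p ** Binv) ** x ** (Bmat p ** Binv)"
    by (simp add: matrix_mul_assoc)
  then show ?thesis by (simp add: B_Binv)
qed

end

theorem mainTheorem10:
  fixes p n e :: nat and R :: "'j \<Rightarrow> real^2^2" and J :: "'j set"
  assumes "prime p" and "p dvd n"
    and "rcoset_reps (Gamma0 (p ^ (e + 1) * n)) (Gamma0 (p * n)) R J"
  shows "rcoset_reps (Gamma0 (p ^ e * n)) (Gamma0 n)
           (\<lambda>j. Bmat p ** R j ** matrix_inv (Bmat p)) J"
proof -
  have p0: "p > 0" using assms(1) prime_gt_0_nat by blast
  let ?H = "Gamma0 (p ^ (e + 1) * n)" and ?H' = "Gamma0 (p ^ e * n)"
  have pe: "p ^ (e + 1) * n = p * (p ^ e * n)" by simp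
  have cov: "Gamma0 (p * n) = (\<Union>j\<in>J. rcoset ?H (R j))"
   and dis: "\<And>j k. j \<in> J \<Longrightarrow> k \<in> J \<Longrightarrow> j \<noteq> k \<Longrightarrow> rcoset ?H (R j) \<inter> rcoset ?H (R k) = {}"
    using assms(3) unfolding rcoset_reps_def by auto
  have Rself: "R j \<in> rcoset ?H (R j)" for j
  proof -
    have "R j = mat 1 ** R j" by simp
    then show ?thesis unfolding rcoset_def using Gamma0_one by blast
  qed
  have RG: "R j \<in> Gamma0 (p * n)" if "j \<in> J" for j
  proof -
    have "R j \<in> (\<Union>j\<in>J. rcoset ?H (R j))" using Rself that by blast
    then show ?thesis using cov by simp
  qed
  note mi = matrix_inv_B[OF p0]
  have sub': "?H' \<subseteq> Gamma0 n" by (rule Gamma0_sub) simp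
  show ?thesis unfolding rcoset_reps_def mi
  proof (intro conjI ballI impI)
    show "Gamma0 n = (\<Union>j\<in>J. rcoset ?H' (Bmat p ** R j ** Binv p))"
    proof
      show "(\<Union>j\<in>J. rcoset ?H' (Bmat p ** R j ** Binv p)) \<subseteq> Gamma0 n"
      proof (clarsimp simp: rcoset_def)
        fix j h assume "j \<in> J" "h \<in> ?H'"
        then show "h ** (Bmat p ** R j ** Binv p) \<in> Gamma0 n"
          using Gamma0_mult phi_Gamma0[OF p0 RG] sub' by blast
      qed
    next
      show "Gamma0 n \<subseteq> (\<Union>j\<in>J. rcoset ?H' (Bmat p ** R j ** Binv p))"
      proof
        fix g assume gG: "g \<in> Gamma0 n"
        obtain a b c d :: int where g: "g = mk a b c d" and dt: "a*d - b*c = 1" and dv: "int n dvd c"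
          using gG Gamma0_iff by blast
        have pc: "int p dvd c" using dv assms(2) by (meson dvd_trans int_dvd_int_iff)
        define h0 where "h0 = mk 1 (of_int (-a*b)) 0 1"
        define h0i where "h0i = mk 1 (of_int (a*b)) 0 1"
        have h0i: "h0i \<in> ?H'" unfolding h0i_def Gamma0_iff
          by (rule exI[of _ 1], rule exI[of _ "a*b"], rule exI[of _ 0], rule exI[of _ 1]) simp
        have h0h0i: "h0i ** h0 = mat 1" unfolding h0_def h0i_def mk_mult mat1_mk by simp
        define g1 where "g1 = h0 ** g"
        have g1: "g1 = mk (of_int (a - a*b*c)) (of_int (b - a*b*d)) (of_int c) (of_int d)"
          unfolding g1_def h0_def g mk_mult by (simp add: algebra_simps)
        have "b - a*b*d = b*(1 - a*d)" by (simp add: algebra_simps)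
        also have "\<dots> = - (b*b*c)" using dt by (simp add: algebra_simps)
        finally have "int p dvd (b - a*b*d)" using pc by simp
        then obtain t where t: "b - a*b*d = int p * t" by blast
        have psi: "Binv p ** g1 ** Bmat p = mk (of_int (a - a*b*c)) (of_int t) (of_int (int p * c)) (of_int d)"
          unfolding g1 psi_mk[OF p0] using p0 t by (simp add: mk_eq)
        have "(a - a*b*c)*d - t * (int p * c) = 1"
        proof -
          have "(a - a*b*c)*d - t * (int p * c) = (a - a*b*c)*d - (b - a*b*d) * c" using t by simp
          also have "\<dots> = a*d - b*c" by (simp add: algebra_simps)
          finally show ?thesis using dt by simp
        qed
        moreover have "int (p*n) dvd int p * c" using dv by simp
        ultimately have "Binv p ** g1 ** Bmat p \<in> Gamma0 (p*n)" unfolding psi Gamma0_iff by blast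
        then obtain j x where j: "j \<in> J" and x: "x \<in> ?H" and xe: "Binv p ** g1 ** Bmat p = x ** R j"
          using cov unfolding rcoset_def by blast
        have "g1 = Bmat p ** (Binv p ** g1 ** Bmat p) ** Binv p" by (rule phi_psi[OF p0, symmetric])
        also have "\<dots> = Bmat p ** (x ** R j) ** Binv p" by (simp only: xe)
        also have "\<dots> = (Bmat p ** x ** Binv p) ** (Bmat p ** R j ** Binv p)" by (rule phi_mult[OF p0])
        finally have g1e: "g1 = (Bmat p ** x ** Binv p) ** (Bmat p ** R j ** Binv p)" .
        have "g = (h0i ** h0) ** g" using h0h0i by simp
        also have "\<dots> = h0i ** g1" unfolding g1_def by (simp only: matrix_mul_assoc)
        also have "\<dots> = (h0i ** (Bmat p ** x ** Binv p)) ** (Bmat p ** R j ** Binv p)"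
          unfolding g1e by (simp only: matrix_mul_assoc)
        finally have "g = (h0i ** (Bmat p ** x ** Binv p)) ** (Bmat p ** R j ** Binv p)" .
        moreover have "x \<in> Gamma0 (p * (p ^ e * n))" using x by (simp add: mult.assoc)
        then have "Bmat p ** x ** Binv p \<in> ?H'" by (rule phi_Gamma0[OF p0])
        then have "h0i ** (Bmat p ** x ** Binv p) \<in> ?H'" by (rule Gamma0_mult[OF h0i])
        ultimately show "g \<in> (\<Union>j\<in>J. rcoset ?H' (Bmat p ** R j ** Binv p))"
          using j unfolding rcoset_def by blast
      qed
    qed
  next
    fix j k assume j: "j \<in> J" and k: "k \<in> J" and jk: "j \<noteq> k"
    show "rcoset ?H' (Bmat p ** R j ** Binv p) \<inter> rcoset ?H' (Bmat p ** R k ** Binv p) = {}"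
    proof (rule ccontr)
      assume "rcoset ?H' (Bmat p ** R j ** Binv p) \<inter> rcoset ?H' (Bmat p ** R k ** Binv p) \<noteq> {}"
      then obtain h h' where h: "h \<in> ?H'" and h': "h' \<in> ?H'"
        and eq: "h ** (Bmat p ** R j ** Binv p) = h' ** (Bmat p ** R k ** Binv p)"
        unfolding rcoset_def by blast
      obtain hi where hi: "hi \<in> ?H'" "hi ** h = mat 1" using Gamma0_inv[OF h] by blast
      obtain Rk' where Rk': "Rk' \<in> Gamma0 (p*n)" "Rk' ** R k = mat 1" "R k ** Rk' = mat 1"
        using Gamma0_inv[OF RG[OF k]] by blast
      define m where "m = R j ** Rk'"
      have mG: "m \<in> Gamma0 (p*n)" unfolding m_def using Gamma0_mult RG[OF j] Rk'(1) by blast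
      have "Bmat p ** m ** Binv p = (Bmat p ** R j ** Binv p) ** (Bmat p ** Rk' ** Binv p)"
        unfolding m_def by (rule phi_mult[OF p0])
      also have "\<dots> = hi ** (h ** (Bmat p ** R j ** Binv p)) ** (Bmat p ** Rk' ** Binv p)"
        using hi(2) by (simp add: matrix_mul_assoc)
      also have "\<dots> = hi ** h' ** (Bmat p ** (R k ** Rk') ** Binv p)"
        unfolding eq phi_mult[OF p0] by (simp add: matrix_mul_assoc)
      also have "\<dots> = hi ** h'" using Rk'(3) B_Binv[OF p0] by simp
      finally have "Bmat p ** m ** Binv p \<in> ?H'" using Gamma0_mult hi(1) h' by simp
      then have "m \<in> Gamma0 (p * (p ^ e * n))" by (rule phi_Gamma0_rev[OF p0 mG])
      then have "m \<in> ?H" by (simp add: mult.assoc)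
      moreover have "R j = m ** R k"
      proof -
        have "m ** R k = R j ** (Rk' ** R k)" unfolding m_def by (simp only: matrix_mul_assoc)
        then show ?thesis using Rk'(2) by simp
      qed
      ultimately have "R j \<in> rcoset ?H (R k)" unfolding rcoset_def by blast
      then show False using dis[OF j k jk] Rself[of j] by blast
    qed
  qed
qed

end
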